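(* Let $Q$ be the transition matrix of a Markov chain on a countable state space that is reversible with respect to a positive measure $\pi$. If $\pi$ is finite, assume $\pi$ is normalized to be a probability measure. Assume that $$c:=\inf\{\pi(x)Q(x,y): x\ne y,\ Q(x,y)>0\}>0 \quad\text{and}\quad a:=\inf_x Q(x,x)>0.$$ Then for all states $x$ and all $k\ge0$: - if $\pi$ is finite, $\left|\frac{Q^k(x,x)}{\pi(x)}-1\right|\le\min\Bigl\{\frac{1}{ac\sqrt{k+1}},\ \frac{1}{2a^2c^2(k+1)}\Bigr\}$; - if $\pi$ is infinite, $\frac{Q^k(x,x)}{\pi(x)}\le\frac{1}{ac\sqrt{k+1}}$. *)

theory Defs
  imports "HOL-Analysis.Analysis"
begin

primrec Qpow :: "('a \<Rightarrow> 'a \<Rightarrow> real) \<Rightarrow> nat \<Rightarrow> 'a \<Rightarrow> 'a \<Rightarrow> real" where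
  "Qpow Q 0 x y = (if x = y then 1 else 0)"
| "Qpow Q (Suc k) x y = (\<Sum>\<^sub>\<infinity>z. Q x z * Qpow Q k z y)"

definition transition_matrix :: "('a \<Rightarrow> 'a \<Rightarrow> real) \<Rightarrow> bool" where
  "transition_matrix Q \<longleftrightarrow> (\<forall>x y. Q x y \<ge> 0) \<and> (\<forall>x. ((\<lambda>y. Q x y) has_sum 1) UNIV)"

definition reversible :: "('a \<Rightarrow> 'a \<Rightarrow> real) \<Rightarrow> ('a \<Rightarrow> real) \<Rightarrow> bool" where
  "reversible Q \<pi> \<longleftrightarrow> (\<forall>x y. \<pi> x * Q x y = \<pi> y * Q y x)"

definition irreducible_chain :: "('a \<Rightarrow> 'a \<Rightarrow> real) \<Rightarrow> bool" where
  "irreducible_chain Q \<longleftrightarrow> (\<forall>x y. \<exists>k. Qpow Q k x y > 0)"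

end

theory Submission
  imports Defs
begin


lemma infsum_fin:
  fixes g :: "'a \<Rightarrow> real"
  assumes "finite A" "\<And>z. z \<notin> A \<Longrightarrow> g z = 0"
  shows "infsum g UNIV = sum g A"
proof -
  have "infsum g UNIV = infsum g A"
    by (rule infsum_cong_neutral) (use assms in auto)
  thus ?thesis using assms by simp
qed

lemma hassum_fin_le:
  fixes g :: "'a \<Rightarrow> real"
  assumes "(g has_sum s) UNIV" "finite F" "\<And>z. g z \<ge> 0"
  shows "sum g F \<le> s"
  by (rule has_sum_mono_neutral[OF has_sum_finite[OF assms(2)] assms(1)]) (use assms in auto)



definition supp :: "('a \<Rightarrow> real) \<Rightarrow> 'a set" where "supp f = {y. f y \<noteq> 0}"

locale chain =
  fixes Q :: "'a::countable \<Rightarrow> 'a \<Rightarrow> real" and \<pi> :: "'a \<Rightarrow> real" and a c :: real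
  assumes nonneg: "\<And>x y. Q x y \<ge> 0"
    and rows: "\<And>x. (Q x has_sum 1) UNIV"
    and pos: "\<And>x. \<pi> x > 0"
    and rev: "\<And>x y. \<pi> x * Q x y = \<pi> y * Q y x"
    and irr: "\<And>x y. \<exists>k. Qpow Q k x y > 0"
    and cpos: "c > 0" and apos: "a > 0"
    and c_le: "\<And>x y. x \<noteq> y \<Longrightarrow> Q x y > 0 \<Longrightarrow> c \<le> \<pi> x * Q x y"
    and a_le: "\<And>x. a \<le> Q x x"
    and two: "\<exists>x y::'a. x \<noteq> y"
begin

lemma sym_pos: "Q x y > 0 \<longleftrightarrow> Q y x > 0"
proof -
  have "\<pi> x * Q x y = \<pi> y * Q y x" by (rule rev)
  thus ?thesis using pos[of x] pos[of y] nonneg[of x y] nonneg[of y x]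
    by (smt (verit) mult_pos_pos zero_less_mult_pos)
qed

lemma sym_nz: "Q x y \<noteq> 0 \<longleftrightarrow> Q y x \<noteq> 0"
  using sym_pos[of x y] nonneg[of x y] nonneg[of y x] by linarith

lemma row_le: "finite F \<Longrightarrow> sum (Q y) F \<le> 1"
  using hassum_fin_le[OF rows] nonneg by blast

lemma nbr_finite: "finite {z. Q y z \<noteq> 0}"
proof -
  let ?T = "{z. z \<noteq> y \<and> Q y z > 0}"
  have T: "finite ?T"
  proof (rule ccontr)
    assume inf: "infinite ?T"
    obtain n :: nat where n: "real n > \<pi> y / c" using reals_Archimedean2 by blast
    obtain F where F: "F \<subseteq> ?T" "finite F" "card F = n"
      using infinite_arbitrarily_large[OF inf] by blast
    have "\<forall>z\<in>F. c / \<pi> y \<le> Q y z"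
      using F(1) c_le pos[of y] by (auto simp: field_simps mult.commute)
    hence "sum (\<lambda>_. c / \<pi> y) F \<le> sum (Q y) F" by (intro sum_mono) auto
    also have "\<dots> \<le> 1" using row_le F(2) by blast
    finally have "real n * (c / \<pi> y) \<le> 1" using F(3) by simp
    hence "real n * c \<le> \<pi> y" using pos[of y] by (simp add: field_simps)
    moreover have "\<pi> y / c * c < real n * c" using n cpos by (intro mult_strict_right_mono) auto
    ultimately show False using cpos by simp
  qed
  have "{z. Q y z \<noteq> 0} \<subseteq> insert y ?T" using nonneg[of y] by (auto simp: order_le_less)
  thus ?thesis using T finite_subset by blast
qed

lemma row_eq: "finite F \<Longrightarrow> {z. Q y z \<noteq> 0} \<subseteq> F \<Longrightarrow> sum (Q y) F = 1"
proof -
  assume F: "finite F" "{z. Q y z \<noteq> 0} \<subseteq> F"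
  have "infsum (Q y) UNIV = sum (Q y) F" by (rule infsum_fin) (use F in auto)
  moreover have "infsum (Q y) UNIV = 1" using rows infsumI by blast
  ultimately show ?thesis by simp
qed

definition Qop :: "('a \<Rightarrow> real) \<Rightarrow> 'a \<Rightarrow> real" where
  "Qop f y = infsum (\<lambda>z. Q y z * f z) UNIV"

lemma Qpow_Suc: "Qpow Q (Suc k) y x = Qop (\<lambda>z. Qpow Q k z x) y"
  by (simp add: Qop_def)

lemma Qop_sum: "finite A \<Longrightarrow> (\<And>z. z \<notin> A \<Longrightarrow> f z = 0) \<Longrightarrow> Qop f y = (\<Sum>z\<in>A. Q y z * f z)"
  unfolding Qop_def by (rule infsum_fin) auto

lemma Qop_sum2: "finite A \<Longrightarrow> {z. Q y z \<noteq> 0} \<subseteq> A \<Longrightarrow> Qop f y = (\<Sum>z\<in>A. Q y z * f z)"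
  unfolding Qop_def by (rule infsum_fin) auto

lemma Qop_one: "Qop (\<lambda>_. 1) y = 1"
  using Qop_sum2[OF nbr_finite subset_refl] row_eq[OF nbr_finite subset_refl] by simp

lemma Qop_bounds:
  assumes "\<And>z. 0 \<le> f z" "\<And>z. f z \<le> 1"
  shows "0 \<le> Qop f y" "Qop f y \<le> 1"
proof -
  have e: "Qop f y = (\<Sum>z\<in>{z. Q y z \<noteq> 0}. Q y z * f z)"
    by (rule Qop_sum2[OF nbr_finite subset_refl])
  show "0 \<le> Qop f y" unfolding e using assms nonneg by (intro sum_nonneg) auto
  have "(\<Sum>z\<in>{z. Q y z \<noteq> 0}. Q y z * f z) \<le> (\<Sum>z\<in>{z. Q y z \<noteq> 0}. Q y z)"
    using assms nonneg by (intro sum_mono) (simp add: mult_left_le)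
  thus "Qop f y \<le> 1" unfolding e using row_le[OF nbr_finite[of y], of y] by linarith
qed

definition nb :: "('a \<Rightarrow> real) \<Rightarrow> 'a set" where
  "nb f = supp f \<union> {y. \<exists>z. f z \<noteq> 0 \<and> Q y z \<noteq> 0}"

lemma nb_finite: "finite (supp f) \<Longrightarrow> finite (nb f)"
proof -
  assume fs: "finite (supp f)"
  have "{y. \<exists>z. f z \<noteq> 0 \<and> Q y z \<noteq> 0} = (\<Union>z\<in>supp f. {y. Q z y \<noteq> 0})"
    using sym_nz by (auto simp: supp_def)
  thus ?thesis using fs nbr_finite unfolding nb_def by auto
qed

lemma supp_Qop: "finite (supp f) \<Longrightarrow> supp (Qop f) \<subseteq> nb f"
proof
  fix y assume fs: "finite (supp f)" and y: "y \<in> supp (Qop f)"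
  have "Qop f y = (\<Sum>z\<in>supp f. Q y z * f z)" by (rule Qop_sum[OF fs]) (auto simp: supp_def)
  with y have "\<exists>z\<in>supp f. Q y z * f z \<noteq> 0" unfolding supp_def
    using sum.neutral by (smt (verit, del_insts) mem_Collect_eq)
  then obtain z where "z \<in> supp f" "Q y z * f z \<noteq> 0" by blast
  thus "y \<in> nb f" unfolding nb_def supp_def by auto
qed

lemma supp_nb: "supp f \<subseteq> nb f" unfolding nb_def by auto

lemma Qop_fin: "finite (supp f) \<Longrightarrow> finite (supp (Qop f))"
  using supp_Qop nb_finite finite_subset by blast

end


context chain begin

definition ip :: "('a \<Rightarrow> real) \<Rightarrow> ('a \<Rightarrow> real) \<Rightarrow> real" where
  "ip f g = (\<Sum>y\<in>supp f. \<pi> y * f y * g y)"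

lemma ip_eq: "finite C \<Longrightarrow> supp f \<subseteq> C \<Longrightarrow> ip f g = (\<Sum>y\<in>C. \<pi> y * f y * g y)"
  unfolding ip_def by (rule sum.mono_neutral_left) (auto simp: supp_def)

lemma ip_sym: "finite (supp f) \<Longrightarrow> finite (supp g) \<Longrightarrow> ip f g = ip g f"
proof -
  assume f: "finite (supp f)" and g: "finite (supp g)"
  have "ip f g = (\<Sum>y\<in>supp f \<union> supp g. \<pi> y * f y * g y)" using f g by (intro ip_eq) auto
  moreover have "ip g f = (\<Sum>y\<in>supp f \<union> supp g. \<pi> y * g y * f y)" using f g by (intro ip_eq) auto
  ultimately show ?thesis by (simp add: mult_ac)
qed

lemma selfadj:
  assumes fs: "finite (supp f)"
  shows "ip (Qop f) g = ip f (Qop g)"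
proof -
  let ?A = "supp f" and ?C = "nb f"
  have C: "finite ?C" using nb_finite fs by blast
  have "ip (Qop f) g = (\<Sum>y\<in>?C. \<pi> y * Qop f y * g y)"
    by (rule ip_eq[OF C supp_Qop[OF fs]])
  also have "\<dots> = (\<Sum>y\<in>?C. \<pi> y * (\<Sum>z\<in>?A. Q y z * f z) * g y)"
    by (intro sum.cong refl) (subst Qop_sum[OF fs], auto simp: supp_def)
  also have "\<dots> = (\<Sum>y\<in>?C. \<Sum>z\<in>?A. (\<pi> y * Q y z) * f z * g y)"
    by (simp add: sum_distrib_left sum_distrib_right mult_ac)
  also have "\<dots> = (\<Sum>z\<in>?A. \<Sum>y\<in>?C. (\<pi> z * Q z y) * f z * g y)"
    by (subst sum.swap) (simp add: rev)
  also have "\<dots> = (\<Sum>z\<in>?A. \<pi> z * f z * (\<Sum>y\<in>?C. Q z y * g y))"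
    by (simp add: sum_distrib_left mult_ac)
  also have "\<dots> = (\<Sum>z\<in>?A. \<pi> z * f z * Qop g z)"
  proof (intro sum.cong refl)
    fix z assume z: "z \<in> ?A"
    have "{y. Q z y \<noteq> 0} \<subseteq> ?C" using z sym_nz by (auto simp: nb_def supp_def)
    thus "\<pi> z * f z * (\<Sum>y\<in>?C. Q z y * g y) = \<pi> z * f z * Qop g z"
      using Qop_sum2[OF C] by simp
  qed
  also have "\<dots> = ip f (Qop g)" by (simp add: ip_def)
  finally show ?thesis .
qed

definition mass :: "('a \<Rightarrow> real) \<Rightarrow> real" where "mass f = ip f (\<lambda>_. 1)"

lemma mass_Qop: "finite (supp f) \<Longrightarrow> mass (Qop f) = mass f"
proof -
  assume f: "finite (supp f)"
  have "Qop (\<lambda>_. 1) = (\<lambda>_. 1)" using Qop_one by (intro ext) simp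
  thus ?thesis unfolding mass_def using selfadj[OF f] by simp
qed

definition v :: "'a \<Rightarrow> nat \<Rightarrow> 'a \<Rightarrow> real" where "v x k y = Qpow Q k y x"
definition u :: "'a \<Rightarrow> nat \<Rightarrow> 'a \<Rightarrow> real" where "u x k y = Qpow Q k y x / \<pi> x"

lemma v_Suc: "v x (Suc k) = Qop (v x k)"
  by (rule ext) (simp add: v_def Qop_def)

lemma v_fin: "finite (supp (v x k))"
proof (induction k)
  case 0
  have "supp (v x 0) \<subseteq> {x}" by (auto simp: supp_def v_def split: if_splits)
  thus ?case using finite_subset by blast
next
  case (Suc k) thus ?case by (simp add: v_Suc Qop_fin)
qed

lemma v_bounds: "0 \<le> v x k y \<and> v x k y \<le> 1"
proof (induction k arbitrary: y)
  case 0 thus ?case by (simp add: v_def)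
next
  case (Suc k) thus ?case using Qop_bounds[of "v x k"] by (simp add: v_Suc)
qed

lemma u_v: "u x k = (\<lambda>y. v x k y / \<pi> x)" by (rule ext) (simp add: u_def v_def)

lemma supp_u: "supp (u x k) = supp (v x k)"
  using pos[of x] by (auto simp: supp_def u_v)

lemma u_fin: "finite (supp (u x k))" using v_fin supp_u by simp

lemma u_nonneg: "0 \<le> u x k y" using v_bounds pos[of x] by (simp add: u_v)

lemma u_Suc: "u x (Suc k) = Qop (u x k)"
proof (rule ext)
  fix y
  have "Qop (u x k) y = (\<Sum>z\<in>supp (v x k). Q y z * (v x k z / \<pi> x))"
    by (subst Qop_sum[OF v_fin]) (auto simp: supp_def u_v)
  also have "\<dots> = (\<Sum>z\<in>supp (v x k). Q y z * v x k z) / \<pi> x"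
    by (simp add: sum_divide_distrib)
  also have "\<dots> = Qop (v x k) y / \<pi> x"
    by (subst Qop_sum[OF v_fin]) (auto simp: supp_def)
  finally show "u x (Suc k) y = Qop (u x k) y" by (simp add: u_v v_Suc)
qed

lemma u0: "u x 0 = (\<lambda>y. if y = x then 1 / \<pi> x else 0)"
  by (rule ext) (simp add: u_def)

lemma ip_u: "ip (u x j) (u x l) = Qpow Q (j + l) x x / \<pi> x"
proof (induction j arbitrary: l)
  case 0
  have "ip (u x 0) (u x l) = (\<Sum>y\<in>{x}. \<pi> y * u x 0 y * u x l y)"
    by (rule ip_eq) (auto simp: supp_def u0)
  also have "\<dots> = u x l x" using pos[of x] by (simp add: u0)
  also have "\<dots> = Qpow Q l x x / \<pi> x" by (simp add: u_def)
  finally show ?case by simp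
next
  case (Suc j)
  have "ip (u x (Suc j)) (u x l) = ip (u x j) (u x (Suc l))"
    by (simp add: u_Suc selfadj u_fin)
  thus ?case using Suc by simp
qed

lemma mass_u: "mass (u x k) = 1"
proof (induction k)
  case 0
  have "mass (u x 0) = (\<Sum>y\<in>{x}. \<pi> y * u x 0 y * 1)"
    unfolding mass_def by (rule ip_eq) (auto simp: supp_def u0)
  thus ?case using pos[of x] by (simp add: u0)
next
  case (Suc k) thus ?case by (simp add: u_Suc mass_Qop u_fin)
qed

lemma Qpow_bounds: "0 \<le> Qpow Q k y x \<and> Qpow Q k y x \<le> 1"
  using v_bounds by (simp add: v_def)

end


lemma var_ineq:
  fixes q f :: "'a \<Rightarrow> real"
  assumes C: "finite C" "y \<in> C" and q: "\<And>z. q z \<ge> 0" "sum q C \<le> 1"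
  shows "(\<Sum>z\<in>C. q z * f z)^2 \<le> (\<Sum>z\<in>C. q z * (f z)^2) - q y * (\<Sum>w\<in>C. q w * (f y - f w)^2)"
proof -
  define s where "s = sum q C"
  define m where "m = (\<Sum>z\<in>C. q z * f z)"
  define T where "T = (\<Sum>z\<in>C. q z * (f z)^2)"
  define g where "g z w = q z * q w * (f z - f w)^2" for z w
  have gnn: "g z w \<ge> 0" for z w using q by (simp add: g_def)
  have "(\<Sum>z\<in>C. \<Sum>w\<in>C. g z w) = (\<Sum>z\<in>C. \<Sum>w\<in>C. (q z * (f z)^2) * q w + q z * (q w * (f w)^2) - 2 * ((q z * f z) * (q w * f w)))"
    unfolding g_def by (intro sum.cong refl) (simp add: power2_eq_square algebra_simps)
  also have "\<dots> = T * s + s * T - 2 * (m * m)"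
    unfolding T_def s_def m_def sum_product by (simp add: sum.distrib sum_subtractf sum_distrib_left)
  finally have id: "(\<Sum>z\<in>C. \<Sum>w\<in>C. g z w) = 2 * s * T - 2 * m^2" by (simp add: power2_eq_square)
  have "(\<Sum>z\<in>C. \<Sum>w\<in>C. g z w) = (\<Sum>w\<in>C. g y w) + (\<Sum>z\<in>C - {y}. \<Sum>w\<in>C. g z w)"
    by (rule sum.remove[OF C])
  also have "(\<Sum>z\<in>C - {y}. \<Sum>w\<in>C. g z w) \<ge> (\<Sum>z\<in>C - {y}. g z y)"
    using C gnn by (intro sum_mono member_le_sum) auto
  moreover have "(\<Sum>z\<in>C - {y}. g z y) = (\<Sum>z\<in>C. g z y)"
    using sum.remove[OF C, of "\<lambda>z. g z y"] by (simp add: g_def)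
  moreover have "(\<Sum>z\<in>C. g z y) = (\<Sum>w\<in>C. g y w)"
    by (simp add: g_def power2_commute mult_ac)
  ultimately have "(\<Sum>z\<in>C. \<Sum>w\<in>C. g z w) \<ge> 2 * (\<Sum>w\<in>C. g y w)" by linarith
  moreover have "(\<Sum>w\<in>C. g y w) = q y * (\<Sum>w\<in>C. q w * (f y - f w)^2)"
    by (simp add: g_def sum_distrib_left mult_ac)
  moreover have "T \<ge> 0" unfolding T_def using q by (intro sum_nonneg) auto
  moreover have "s * T \<le> 1 * T" using \<open>T \<ge> 0\<close> q(2) s_def by (intro mult_right_mono) auto
  ultimately show ?thesis using id unfolding m_def T_def by linarith
qed

fun pth :: "('a \<Rightarrow> 'a \<Rightarrow> real) \<Rightarrow> 'a list \<Rightarrow> 'a \<Rightarrow> bool" where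
  "pth Q [] z = False"
| "pth Q [y] z = (Q y z > 0)"
| "pth Q (y # w # r) z = (Q y w > 0 \<and> pth Q (w # r) z)"

fun esum :: "('a \<Rightarrow> real) \<Rightarrow> 'a list \<Rightarrow> 'a \<Rightarrow> real" where
  "esum f [] z = 0"
| "esum f [y] z = (f y - f z)^2"
| "esum f (y # w # r) z = (f y - f w)^2 + esum f (w # r) z"

fun eset :: "'a list \<Rightarrow> 'a \<Rightarrow> ('a \<times> 'a) set" where
  "eset [] z = {}"
| "eset [y] z = {(y,z),(z,y)}"
| "eset (y # w # r) z = {(y,w),(w,y)} \<union> eset (w # r) z"

lemma eset_sub: "p \<in> eset ps z \<Longrightarrow> fst p \<in> insert z (set ps) \<and> snd p \<in> insert z (set ps)"
  by (induction ps z rule: eset.induct) auto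

lemma eset_finite: "finite (eset ps z)"
  by (induction ps z rule: eset.induct) auto

lemma pth_suffix: "pth Q (pre @ ps) z \<Longrightarrow> ps \<noteq> [] \<Longrightarrow> pth Q ps z"
proof (induction pre)
  case Nil thus ?case by simp
next
  case (Cons p pre)
  then obtain w r where "pre @ ps = w # r" by (cases "pre @ ps") auto
  thus ?case using Cons by simp
qed

lemma pth_last: "pth Q ps z \<Longrightarrow> \<exists>p\<in>set ps. Q p z > 0"
  by (induction Q ps z rule: pth.induct) auto

lemma esum_cs: "ps \<noteq> [] \<Longrightarrow> (f (hd ps) - f z)^2 \<le> real (length ps) * esum f ps z"
proof (induction f ps z rule: esum.induct)
  case (1 f z) thus ?case by simp
next
  case (2 f y z) thus ?case by simp
next
  case (3 f y w r z)
  define d where "d = f y - f w"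
  define e where "e = f w - f z"
  define L where "L = real (length (w # r))"
  define E where "E = esum f (w # r) z"
  have IH: "e^2 \<le> L * E" using 3 by (simp add: e_def L_def E_def)
  have L1: "L \<ge> 1" by (simp add: L_def)
  have "L * (d + e)^2 \<le> L * (L + 1) * (d^2 + E)"
  proof -
    have "L * (d + e)^2 = L * (L + 1) * d^2 + (L + 1) * e^2 - (L * d - e)^2"
      by (simp add: power2_eq_square algebra_simps)
    also have "\<dots> \<le> L * (L + 1) * d^2 + (L + 1) * e^2" by simp
    also have "(L + 1) * e^2 \<le> (L + 1) * (L * E)" using IH L1 by (intro mult_left_mono) auto
    finally show ?thesis by (simp add: algebra_simps)
  qed
  hence "(d + e)^2 \<le> (L + 1) * (d^2 + E)" using L1
    by (smt (verit, ccfv_SIG) mult.assoc mult_le_cancel_left_pos)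
  moreover have h1: "f (hd (y # w # r)) - f z = d + e" by (simp add: d_def e_def)
  moreover have h2: "real (length (y # w # r)) = L + 1" by (simp add: L_def)
  moreover have h3: "esum f (y # w # r) z = d^2 + E" by (simp add: d_def E_def)
  ultimately show ?case unfolding h1 h2 h3 by simp
qed



context chain begin

lemma has_nbr: "\<exists>z. z \<noteq> y \<and> Q y z > 0"
proof (rule ccontr)
  assume H: "\<not> (\<exists>z. z \<noteq> y \<and> Q y z > 0)"
  hence H0: "Q y z = 0" if "z \<noteq> y" for z using nonneg[of y z] that by force
  obtain y' where y': "y' \<noteq> y" using two by metis
  have "Qpow Q k y y' = 0" for k
  proof (induction k)
    case 0 thus ?case using y' by simp
  next
    case (Suc k)
    have "Qpow Q (Suc k) y y' = (\<Sum>z\<in>{y}. Q y z * Qpow Q k z y')"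
      by (subst Qpow_Suc, rule Qop_sum2) (use H0 in auto)
    thus ?case using Suc by simp
  qed
  thus False using irr[of y y'] by auto
qed

lemma a_lt1: "a < 1" and pi_lower: "c / (1 - a) \<le> \<pi> y"
proof -
  obtain z where z: "z \<noteq> y" "Q y z > 0" using has_nbr by blast
  have "sum (Q y) {y, z} \<le> 1" by (rule row_le) simp
  hence "Q y y + Q y z \<le> 1" using z by simp
  hence "Q y z \<le> 1 - a" using a_le[of y] by linarith
  moreover have "c \<le> \<pi> y * Q y z" using c_le z by auto
  ultimately have cle: "c \<le> \<pi> y * (1 - a)" using pos[of y]
    by (smt (verit) mult_left_mono)
  thus "a < 1" using cpos pos[of y] by (smt (verit) mult_nonneg_nonpos)
  thus "c / (1 - a) \<le> \<pi> y" using cle by (simp add: divide_le_eq mult.commute)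
qed

definition D :: "'a set \<Rightarrow> ('a \<Rightarrow> real) \<Rightarrow> real" where
  "D C f = (\<Sum>y\<in>C. \<Sum>w\<in>C. \<pi> y * Q y w * (f y - f w)^2)"

lemma D_nonneg: "D C f \<ge> 0"
  unfolding D_def using pos nonneg by (intro sum_nonneg mult_nonneg_nonneg) (auto intro: less_imp_le)

lemma energy:
  assumes C: "finite C" "supp f \<subseteq> C" "supp (Qop f) \<subseteq> C"
  shows "ip (Qop f) (Qop f) \<le> ip f f - a * D C f"
proof -
  have Qf: "Qop f y = (\<Sum>z\<in>C. Q y z * f z)" for y
    by (rule Qop_sum[OF C(1)]) (use C(2) in \<open>auto simp: supp_def\<close>)
  have "ip (Qop f) (Qop f) = (\<Sum>y\<in>C. \<pi> y * (\<Sum>z\<in>C. Q y z * f z)^2)"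
    by (subst ip_eq[OF C(1) C(3)]) (simp add: Qf power2_eq_square mult_ac)
  also have "\<dots> \<le> (\<Sum>y\<in>C. \<pi> y * ((\<Sum>z\<in>C. Q y z * (f z)^2) - Q y y * (\<Sum>w\<in>C. Q y w * (f y - f w)^2)))"
  proof (intro sum_mono mult_left_mono)
    fix y assume "y \<in> C"
    thus "(\<Sum>z\<in>C. Q y z * f z)^2 \<le> (\<Sum>z\<in>C. Q y z * (f z)^2) - Q y y * (\<Sum>w\<in>C. Q y w * (f y - f w)^2)"
      using var_ineq[OF C(1), of y "Q y" f] nonneg row_le[OF C(1)] by blast
    show "0 \<le> \<pi> y" using pos[of y] by simp
  qed
  also have "\<dots> = (\<Sum>y\<in>C. \<Sum>z\<in>C. \<pi> y * Q y z * (f z)^2) - (\<Sum>y\<in>C. Q y y * (\<Sum>w\<in>C. \<pi> y * Q y w * (f y - f w)^2))"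
    by (simp add: sum_subtractf right_diff_distrib sum_distrib_left mult_ac)
  also have "(\<Sum>y\<in>C. \<Sum>z\<in>C. \<pi> y * Q y z * (f z)^2) = (\<Sum>z\<in>C. \<Sum>y\<in>C. \<pi> z * Q z y * (f z)^2)"
    by (subst sum.swap) (simp add: rev)
  also have "\<dots> = (\<Sum>z\<in>C. \<pi> z * (f z)^2 * sum (Q z) C)"
  proof (intro sum.cong refl)
    fix z
    show "(\<Sum>y\<in>C. \<pi> z * Q z y * (f z)^2) = \<pi> z * (f z)^2 * sum (Q z) C"
      by (simp add: sum_distrib_left sum_distrib_right mult_ac)
  qed
  also have "\<dots> \<le> (\<Sum>z\<in>C. \<pi> z * (f z)^2)"
  proof (intro sum_mono mult_left_le)
    fix z show "sum (Q z) C \<le> 1" using row_le[OF C(1)] by blast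
    show "0 \<le> \<pi> z * (f z)^2" using pos[of z] by simp
  qed
  also have "\<dots> = ip f f" by (subst ip_eq[OF C(1) C(2)]) (simp add: power2_eq_square mult_ac)
  also have "(\<Sum>y\<in>C. Q y y * (\<Sum>w\<in>C. \<pi> y * Q y w * (f y - f w)^2)) \<ge> (\<Sum>y\<in>C. a * (\<Sum>w\<in>C. \<pi> y * Q y w * (f y - f w)^2))"
    using a_le pos nonneg
    by (intro sum_mono mult_right_mono sum_nonneg mult_nonneg_nonneg) (auto intro: less_imp_le)
  moreover have "(\<Sum>y\<in>C. a * (\<Sum>w\<in>C. \<pi> y * Q y w * (f y - f w)^2)) = a * D C f"
    by (simp add: D_def sum_distrib_left)
  ultimately show ?thesis by linarith
qed

lemma eset_sum:
  "pth Q ps z \<Longrightarrow> distinct ps \<Longrightarrow> z \<notin> set ps \<Longrightarrow>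
     2 * c * esum f ps z \<le> (\<Sum>(p,q)\<in>eset ps z. \<pi> p * Q p q * (f p - f q)^2)"
proof (induction ps z rule: eset.induct)
  case (1 z) thus ?case by simp
next
  case (2 y z)
  have yz: "y \<noteq> z" "Q y z > 0" using 2 by auto
  have w1: "c * (f y - f z)^2 \<le> \<pi> y * Q y z * (f y - f z)^2"
    using c_le[OF yz] by (intro mult_right_mono) auto
  have "\<pi> z * Q z y * (f z - f y)^2 = \<pi> y * Q y z * (f y - f z)^2"
    by (simp add: rev[of z y] power2_commute)
  thus ?case using yz w1 by simp
next
  case (3 y w r z)
  have yw: "y \<noteq> w" "Q y w > 0" using 3 by auto
  have yn: "y \<notin> insert z (set (w # r))" using 3 by auto
  have notin: "(y, w) \<notin> eset (w # r) z" "(w, y) \<notin> eset (w # r) z"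
    using eset_sub[of _ "w # r" z] yn by force+
  have IH: "2 * c * esum f (w # r) z \<le> (\<Sum>(p,q)\<in>eset (w # r) z. \<pi> p * Q p q * (f p - f q)^2)"
    using 3 by simp
  have w1: "c * (f y - f w)^2 \<le> \<pi> y * Q y w * (f y - f w)^2"
    using c_le[OF yw] by (intro mult_right_mono) auto
  have w2: "\<pi> w * Q w y * (f w - f y)^2 = \<pi> y * Q y w * (f y - f w)^2"
    by (simp add: rev[of w y] power2_commute)
  have "eset (y # w # r) z = insert (y, w) (insert (w, y) (eset (w # r) z))" by simp
  have sumeq: "(\<Sum>(p,q)\<in>eset (y # w # r) z. \<pi> p * Q p q * (f p - f q)^2) =
     \<pi> y * Q y w * (f y - f w)^2 + \<pi> w * Q w y * (f w - f y)^2 + (\<Sum>(p,q)\<in>eset (w # r) z. \<pi> p * Q p q * (f p - f q)^2)"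
  proof -
    have fin: "finite (eset (w # r) z)" by (rule eset_finite)
    have ne: "(y, w) \<notin> insert (w, y) (eset (w # r) z)" using notin yw by auto
    show ?thesis
      unfolding \<open>eset (y # w # r) z = insert (y, w) (insert (w, y) (eset (w # r) z))\<close>
      using fin ne notin by (simp add: sum.insert)
  qed
  have e: "2 * c * esum f (y # w # r) z = 2 * (c * (f y - f w)^2) + 2 * c * esum f (w # r) z"
    by (simp add: algebra_simps)
  show ?case using sumeq IH w1 w2 e by linarith
qed

lemma D_ge_eset:
  assumes "finite C" "eset ps z \<subseteq> C \<times> C"
  shows "(\<Sum>(p,q)\<in>eset ps z. \<pi> p * Q p q * (f p - f q)^2) \<le> D C f"
proof -
  have "D C f = (\<Sum>(p,q)\<in>C \<times> C. \<pi> p * Q p q * (f p - f q)^2)"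
    unfolding D_def by (rule sum.cartesian_product)
  moreover have "(\<Sum>(p,q)\<in>eset ps z. \<pi> p * Q p q * (f p - f q)^2) \<le> (\<Sum>(p,q)\<in>C \<times> C. \<pi> p * Q p q * (f p - f q)^2)"
  proof (rule sum_mono2)
    show "finite (C \<times> C)" using assms by simp
    show "eset ps z \<subseteq> C \<times> C" using assms by simp
    fix b assume "b \<in> C \<times> C - eset ps z"
    obtain p q where b: "b = (p, q)" by (cases b)
    have "0 \<le> \<pi> p * Q p q * (f p - f q)^2"
      using pos[of p] nonneg[of p q] by simp
    thus "0 \<le> (case b of (p, q) \<Rightarrow> \<pi> p * Q p q * (f p - f q)^2)" by (simp add: b)
  qed
  ultimately show ?thesis by simp
qed

end

context chain begin
lemma walk:
  "Qpow Q k y z > 0 \<Longrightarrow> y \<in> S \<Longrightarrow> z \<notin> S \<Longrightarrow>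
     \<exists>ps z'. pth Q ps z' \<and> distinct ps \<and> ps \<noteq> [] \<and> hd ps = y \<and> set ps \<subseteq> S \<and> z' \<notin> S"
proof (induction k arbitrary: y)
  case 0
  hence "y = z" by (simp split: if_splits)
  with 0 show ?case by blast
next
  case (Suc k)
  have "Qop (\<lambda>w. Qpow Q k w z) y \<noteq> 0" using Suc(2) by (simp add: Qop_def)
  hence "\<exists>w. Q y w * Qpow Q k w z \<noteq> 0" unfolding Qop_def
    using infsum_0[of UNIV "\<lambda>w. Q y w * Qpow Q k w z"] by blast
  then obtain w where w: "Q y w * Qpow Q k w z \<noteq> 0" by blast
  have wpos: "Q y w > 0" "Qpow Q k w z > 0"
  proof -
    have "Q y w \<noteq> 0" "Qpow Q k w z \<noteq> 0" using w by auto
    thus "Q y w > 0" "Qpow Q k w z > 0" using nonneg[of y w] Qpow_bounds[of k w z] by (simp_all add: less_le)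
  qed
  show ?case
  proof (cases "w \<in> S")
    case False
    have "pth Q [y] w" using wpos by simp
    moreover have "distinct [y] \<and> [y] \<noteq> [] \<and> hd [y] = y \<and> set [y] \<subseteq> S" using Suc(3) by simp
    ultimately have "pth Q [y] w \<and> distinct [y] \<and> [y] \<noteq> [] \<and> hd [y] = y \<and> set [y] \<subseteq> S \<and> w \<notin> S" using False by simp
    thus ?thesis by (rule exI[of _ "[y]", OF exI[of _ w]])
  next
    case True
    from Suc.IH[OF wpos(2) True Suc(4)] obtain ps z' where
      ps: "pth Q ps z'" "distinct ps" "ps \<noteq> []" "hd ps = w" "set ps \<subseteq> S" "z' \<notin> S" by blast
    show ?thesis
    proof (cases "y \<in> set ps")
      case True
      then obtain pre post where sp: "ps = pre @ y # post" using split_list[of y ps] by blast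
      have "pth Q (pre @ (y # post)) z'" using ps(1) unfolding sp .
      hence "pth Q (y # post) z'" by (rule pth_suffix) simp
      moreover have "distinct (y # post)" using ps(2) sp by simp
      moreover have "set (y # post) \<subseteq> S" using ps(5) sp by auto
      ultimately have "pth Q (y # post) z' \<and> distinct (y # post) \<and> y # post \<noteq> [] \<and> hd (y # post) = y \<and> set (y # post) \<subseteq> S \<and> z' \<notin> S" using ps(6) by simp
      thus ?thesis by (rule exI[of _ "y # post", OF exI[of _ z']])
    next
      case False
      define r where "r = tl ps"
      have r: "ps = w # r" unfolding r_def using ps(3) ps(4) list.collapse[of ps] by simp
      have "pth Q (y # ps) z'" using r ps(1) wpos(1) by simp
      moreover have "distinct (y # ps)" using False ps(2) by simp
      moreover have "set (y # ps) \<subseteq> S" using ps(5) Suc(3) by simp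
      ultimately have "pth Q (y # ps) z' \<and> distinct (y # ps) \<and> y # ps \<noteq> [] \<and> hd (y # ps) = y \<and> set (y # ps) \<subseteq> S \<and> z' \<notin> S" using ps(6) by simp
      thus ?thesis by (rule exI[of _ "y # ps", OF exI[of _ z']])
    qed
  qed
qed

end


context chain begin

lemma ip_le_M:
  assumes fin: "finite (supp f)" and nn: "\<And>y. f y \<ge> 0" and M: "\<And>y. f y \<le> M"
  shows "ip f f \<le> M * mass f"
proof -
  have "ip f f = (\<Sum>y\<in>supp f. \<pi> y * f y * f y)" by (simp add: ip_def)
  also have "\<dots> \<le> (\<Sum>y\<in>supp f. \<pi> y * f y * M)"
    using nn M pos by (intro sum_mono mult_left_mono mult_nonneg_nonneg) (auto intro: less_imp_le)
  also have "\<dots> = M * mass f" by (simp add: mass_def ip_def sum_distrib_left mult_ac)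
  finally show ?thesis .
qed

lemma term_nn: "0 \<le> \<pi> y * f y * f y"
proof -
  have "0 \<le> f y * f y" by simp
  hence "0 \<le> \<pi> y * (f y * f y)" by (rule mult_nonneg_nonneg[OF less_imp_le[OF pos[of y]]])
  thus "0 \<le> \<pi> y * f y * f y" by (simp add: mult.assoc)
qed

lemma ip_nonneg: "ip f f \<ge> 0"
  unfolding ip_def using term_nn by (intro sum_nonneg) auto

lemma mass_nz: "mass f = 1 \<Longrightarrow> \<exists>y. f y \<noteq> 0"
  unfolding mass_def ip_def supp_def by (rule ccontr) simp

lemma ip_pos:
  assumes fin: "finite (supp f)" and m: "mass f = 1"
  shows "ip f f > 0"
proof -
  obtain y where y: "f y \<noteq> 0" using mass_nz[OF m] by blast
  have "0 < (f y)^2" using y by simp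
  hence "0 < \<pi> y * (f y)^2" using pos[of y] by simp
  hence "0 < \<pi> y * f y * f y" by (simp add: power2_eq_square mult.assoc)
  also have "\<dots> \<le> ip f f" unfolding ip_def
    using fin y term_nn by (intro member_le_sum) (auto simp: supp_def)
  finally show ?thesis .
qed

lemma exists_max:
  assumes fin: "finite (supp f)" and nn: "\<And>y. f y \<ge> 0" and m: "mass f = 1"
  shows "\<exists>y0. \<forall>y. f y \<le> f y0"
proof -
  have ne: "supp f \<noteq> {}" using mass_nz[OF m] by (auto simp: supp_def)
  define M where "M = Max (f ` supp f)"
  have "M \<in> f ` supp f" unfolding M_def using fin ne by (intro Max_in) auto
  then obtain y0 where y0: "y0 \<in> supp f" "f y0 = M" by blast
  have "f y \<le> f y0" for y
  proof (cases "y \<in> supp f")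
    case True thus ?thesis using y0 fin by (simp add: M_def)
  next
    case False thus ?thesis using nn[of y0] by (simp add: supp_def)
  qed
  thus ?thesis by blast
qed

definition alpha :: real where "alpha = 8 * a * c^2 / (27 * (1 - a))"

lemma nash:
  assumes fin: "finite (supp f)" and nn: "\<And>y. f y \<ge> 0" and m1: "mass f = 1"
    and M: "\<And>y. f y \<le> M" and y0: "f y0 = M"
    and S: "{y. f y > M / 3} \<noteq> UNIV"
  shows "ip (Qop f) (Qop f) \<le> ip f f - alpha * (ip f f)^3"
proof -
  define S where "S = {y. f y > M / 3}"
  obtain y1 where y1: "f y1 \<noteq> 0" using mass_nz[OF m1] by blast
  have Mpos: "M > 0" using y1 nn[of y1] M[of y1] by linarith
  have Ssub: "S \<subseteq> supp f" using Mpos by (auto simp: S_def supp_def)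
  have Sfin: "finite S" using finite_subset[OF Ssub fin] .
  have y0S: "y0 \<in> S" using y0 Mpos by (simp add: S_def)
  obtain z0 where z0: "z0 \<notin> S" using S unfolding S_def by blast
  obtain k where "Qpow Q k y0 z0 > 0" using irr by blast
  from walk[OF this y0S z0] obtain ps z' where
    ps: "pth Q ps z'" "distinct ps" "ps \<noteq> []" "hd ps = y0" "set ps \<subseteq> S" "z' \<notin> S" by blast
  define C where "C = nb f"
  have Cfin: "finite C" using nb_finite[OF fin] by (simp add: C_def)
  have en: "ip (Qop f) (Qop f) \<le> ip f f - a * D C f"
    using energy[OF Cfin] supp_nb supp_Qop[OF fin] by (simp add: C_def)
  obtain p where p: "p \<in> set ps" "Q p z' > 0" using pth_last[OF ps(1)] by blast
  have pC: "set ps \<subseteq> C" using ps(5) Ssub supp_nb by (auto simp: C_def)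
  have zC: "z' \<in> C"
  proof -
    have "f p \<noteq> 0" using p(1) ps(5) Ssub by (auto simp: supp_def)
    moreover have "Q z' p \<noteq> 0" using p(2) sym_pos[of p z'] by simp
    ultimately show ?thesis by (auto simp: C_def nb_def)
  qed
  have esub: "eset ps z' \<subseteq> C \<times> C"
    using eset_sub[of _ ps z'] pC zC by fastforce
  have zn: "z' \<notin> set ps" using ps(5) ps(6) by blast
  have Dge: "2 * c * esum f ps z' \<le> D C f"
    using eset_sum[OF ps(1) ps(2) zn, of f] D_ge_eset[OF Cfin esub, of f] by linarith
  define L where "L = real (length ps)"
  define E where "E = esum f ps z'"
  have Lpos: "L > 0" using ps(3) by (simp add: L_def)
  have cs: "(f y0 - f z')^2 \<le> L * E" using esum_cs[OF ps(3), of f z'] ps(4) by (simp add: L_def E_def)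
  have fz: "f z' \<le> M / 3" using ps(6) by (simp add: S_def)
  have h1: "(2 * M / 3)^2 \<le> L * E"
  proof -
    have "2 * M / 3 \<le> f y0 - f z'" using fz y0 by simp
    hence "(2 * M / 3)^2 \<le> (f y0 - f z')^2" using Mpos by (intro power_mono) auto
    thus ?thesis using cs by linarith
  qed
  have LS: "L \<le> real (card S)"
  proof -
    have "length ps = card (set ps)" using distinct_card[OF ps(2)] by simp
    also have "\<dots> \<le> card S" using card_mono[OF Sfin ps(5)] .
    finally show ?thesis by (simp add: L_def)
  qed
  have a1: "a < 1" by (rule a_lt1)
  have cardS: "real (card S) * (c / (1 - a)) * (M / 3) \<le> 1"
  proof -
    have "real (card S) * (c / (1 - a)) = (\<Sum>y\<in>S. c / (1 - a))" by simp
    also have "\<dots> \<le> (\<Sum>y\<in>S. \<pi> y)" using pi_lower by (intro sum_mono) auto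
    finally have "real (card S) * (c / (1 - a)) * (M / 3) \<le> (\<Sum>y\<in>S. \<pi> y) * (M / 3)"
      using Mpos by (intro mult_right_mono) auto
    also have "\<dots> = (\<Sum>y\<in>S. \<pi> y * (M / 3))" by (simp add: sum_distrib_right)
    also have "\<dots> \<le> (\<Sum>y\<in>S. \<pi> y * f y * 1)"
      using pos by (intro sum_mono) (auto simp: S_def intro: mult_left_mono less_imp_le)
    also have "\<dots> \<le> (\<Sum>y\<in>supp f. \<pi> y * f y * 1)"
      using fin Ssub pos nn by (intro sum_mono2) (auto intro: mult_nonneg_nonneg less_imp_le)
    also have "\<dots> = 1" using m1 by (simp add: mass_def ip_def)
    finally show ?thesis .
  qed
  have h2: "L * c * M \<le> 3 * (1 - a)"
  proof -
    have "L * (c / (1 - a)) * (M / 3) \<le> real (card S) * (c / (1 - a)) * (M / 3)"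
      using LS cpos a1 Mpos by (intro mult_right_mono) (auto intro: divide_nonneg_pos)
    hence "L * (c / (1 - a)) * (M / 3) \<le> 1" using cardS by linarith
    thus ?thesis using a1 by (simp add: field_simps)
  qed
  have Enn: "E \<ge> 0"
  proof -
    have "0 \<le> (2 * M / 3)^2" by simp
    hence "0 \<le> L * E" using h1 by linarith
    thus ?thesis using Lpos by (simp add: zero_le_mult_iff)
  qed
  have key: "4 * c * M^3 \<le> 27 * (1 - a) * E"
  proof -
    have "(4 / 9) * M^2 \<le> L * E" using h1 by (simp add: power2_eq_square)
    hence "(4 / 9) * M^2 * (c * M) \<le> L * E * (c * M)" using cpos Mpos by (intro mult_right_mono) auto
    also have "\<dots> = (L * c * M) * E" by (simp add: mult_ac)
    also have "\<dots> \<le> (3 * (1 - a)) * E" using h2 Enn by (intro mult_right_mono) auto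
    finally show ?thesis by (simp add: power3_eq_cube power2_eq_square algebra_simps)
  qed
  have "alpha * M^3 \<le> a * (2 * c * E)"
  proof -
    have "alpha * M^3 = (2 * a * c / (27 * (1 - a))) * (4 * c * M^3)"
      by (simp add: alpha_def power2_eq_square field_simps)
    also have "\<dots> \<le> (2 * a * c / (27 * (1 - a))) * (27 * (1 - a) * E)"
      using key apos cpos a1 by (intro mult_left_mono) auto
    also have "\<dots> = a * (2 * c * E)" using a1 by (simp add: field_simps)
    finally show ?thesis .
  qed
  also have "\<dots> \<le> a * D C f" using Dge apos by (simp add: E_def)
  finally have aD: "alpha * M^3 \<le> a * D C f" .
  have ipM: "ip f f \<le> M" using ip_le_M[OF fin nn M] m1 by simp
  have "(ip f f)^3 \<le> M^3" using ipM ip_nonneg by (intro power_mono) auto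
  hence "alpha * (ip f f)^3 \<le> alpha * M^3"
    using apos cpos a1 by (intro mult_left_mono) (auto simp: alpha_def)
  thus ?thesis using en aD by linarith
qed

end


context chain begin

lemma ip_am:
  assumes f: "finite (supp f)" and g: "finite (supp g)"
  shows "2 * ip f g \<le> ip f f + ip g g"
proof -
  let ?C = "supp f \<union> supp g"
  have C: "finite ?C" using f g by simp
  have e1: "ip f g = (\<Sum>y\<in>?C. \<pi> y * f y * g y)" by (rule ip_eq[OF C]) auto
  have e2: "ip f f = (\<Sum>y\<in>?C. \<pi> y * f y * f y)" by (rule ip_eq[OF C]) auto
  have e3: "ip g g = (\<Sum>y\<in>?C. \<pi> y * g y * g y)" by (rule ip_eq[OF C]) auto
  have "2 * (\<Sum>y\<in>?C. \<pi> y * f y * g y) \<le> (\<Sum>y\<in>?C. \<pi> y * f y * f y) + (\<Sum>y\<in>?C. \<pi> y * g y * g y)"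
  proof -
    have "(\<Sum>y\<in>?C. 2 * (\<pi> y * f y * g y)) \<le> (\<Sum>y\<in>?C. \<pi> y * f y * f y + \<pi> y * g y * g y)"
    proof (intro sum_mono)
      fix y
      have "0 \<le> \<pi> y * (f y - g y)^2" using pos[of y] by simp
      thus "2 * (\<pi> y * f y * g y) \<le> \<pi> y * f y * f y + \<pi> y * g y * g y"
        by (simp add: power2_eq_square algebra_simps)
    qed
    thus ?thesis by (simp add: sum_distrib_left sum.distrib)
  qed
  thus ?thesis using e1 e2 e3 by simp
qed

lemma fin_dev:
  assumes fu: "finite (UNIV :: 'a set)" and s1: "sum \<pi> UNIV = 1"
    and mf: "mass f = 1" and mg: "mass g = 1"
  shows "\<bar>ip f g - 1\<bar> \<le> ((ip f f - 1) + (ip g g - 1)) / 2"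
proof -
  have ipU: "ip h k = (\<Sum>y\<in>UNIV. \<pi> y * h y * k y)" for h k by (rule ip_eq[OF fu]) auto
  have dev: "ip h k - 1 = (\<Sum>y\<in>UNIV. \<pi> y * (h y - 1) * (k y - 1))" if "mass h = 1" "mass k = 1" for h k
  proof -
    have mh: "(\<Sum>y\<in>UNIV. \<pi> y * h y * 1) = 1" using that(1) unfolding mass_def ipU .
    have mk: "(\<Sum>y\<in>UNIV. \<pi> y * k y * 1) = 1" using that(2) unfolding mass_def ipU .
    have pt: "\<pi> y * (h y - 1) * (k y - 1) = \<pi> y * h y * k y - \<pi> y * h y * 1 - \<pi> y * k y * 1 + \<pi> y" for y
      by (simp add: algebra_simps)
    have "(\<Sum>y\<in>UNIV. \<pi> y * (h y - 1) * (k y - 1)) =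
          (\<Sum>y\<in>UNIV. \<pi> y * h y * k y) - (\<Sum>y\<in>UNIV. \<pi> y * h y * 1) - (\<Sum>y\<in>UNIV. \<pi> y * k y * 1) + (\<Sum>y\<in>UNIV. \<pi> y)"
      unfolding pt by (simp only: sum.distrib sum_subtractf)
    thus ?thesis using mh mk s1 ipU[of h k] by linarith
  qed
  define A where "A = (\<Sum>y\<in>UNIV. \<pi> y * (f y - 1) * (g y - 1))"
  define B where "B = (\<Sum>y\<in>UNIV. \<pi> y * (f y - 1) * (f y - 1))"
  define B' where "B' = (\<Sum>y\<in>UNIV. \<pi> y * (g y - 1) * (g y - 1))"
  have d1: "ip f g - 1 = A" unfolding A_def by (rule dev[OF mf mg])
  have d2: "ip f f - 1 = B" unfolding B_def by (rule dev[OF mf mf])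
  have d3: "ip g g - 1 = B'" unfolding B'_def by (rule dev[OF mg mg])
  have p1: "2 * (\<pi> y * (f y - 1) * (g y - 1)) \<le> \<pi> y * (f y - 1) * (f y - 1) + \<pi> y * (g y - 1) * (g y - 1)" for y
  proof -
    have "0 \<le> \<pi> y * ((f y - 1) - (g y - 1))^2" using pos[of y] by simp
    thus ?thesis by (simp add: power2_eq_square algebra_simps)
  qed
  have p2: "- 2 * (\<pi> y * (f y - 1) * (g y - 1)) \<le> \<pi> y * (f y - 1) * (f y - 1) + \<pi> y * (g y - 1) * (g y - 1)" for y
  proof -
    have "0 \<le> \<pi> y * ((f y - 1) + (g y - 1))^2" using pos[of y] by simp
    thus ?thesis by (simp add: power2_eq_square algebra_simps)
  qed
  have s1': "(\<Sum>y\<in>UNIV. 2 * (\<pi> y * (f y - 1) * (g y - 1))) \<le> (\<Sum>y\<in>UNIV. \<pi> y * (f y - 1) * (f y - 1) + \<pi> y * (g y - 1) * (g y - 1))"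
    by (rule sum_mono) (rule p1)
  have s2': "(\<Sum>y\<in>UNIV. - 2 * (\<pi> y * (f y - 1) * (g y - 1))) \<le> (\<Sum>y\<in>UNIV. \<pi> y * (f y - 1) * (f y - 1) + \<pi> y * (g y - 1) * (g y - 1))"
    by (rule sum_mono) (rule p2)
  have e1: "(\<Sum>y\<in>UNIV. 2 * (\<pi> y * (f y - 1) * (g y - 1))) = 2 * A"
    unfolding A_def by (rule sum_distrib_left[symmetric])
  have e2: "(\<Sum>y\<in>UNIV. - 2 * (\<pi> y * (f y - 1) * (g y - 1))) = - 2 * A"
    unfolding A_def by (rule sum_distrib_left[symmetric])
  have e3: "(\<Sum>y\<in>UNIV. \<pi> y * (f y - 1) * (f y - 1) + \<pi> y * (g y - 1) * (g y - 1)) = B + B'"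
    unfolding B_def B'_def by (rule sum.distrib)
  have "2 * A \<le> B + B'" "- 2 * A \<le> B + B'" using s1' s2' e1 e2 e3 by linarith+
  thus ?thesis using d1 d2 d3 by (simp add: abs_le_iff)
qed

lemma fin_ge1:
  assumes fu: "finite (UNIV :: 'a set)" and s1: "sum \<pi> UNIV = 1" and mf: "mass f = 1"
  shows "ip f f \<ge> 1"
proof -
  define x where "x = ip f f - 1"
  have "\<bar>x\<bar> \<le> (x + x) / 2" using fin_dev[OF fu s1 mf mf] by (simp add: x_def)
  also have "(x + x) / 2 = x" by simp
  finally have "\<bar>x\<bar> \<le> x" .
  hence "0 \<le> x" by (simp add: abs_le_iff)
  thus ?thesis by (simp add: x_def)
qed

end

context chain begin
definition beta :: real where "beta = 2 * a * c^2 / (1 - a)"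

lemma gap:
  assumes fu: "finite (UNIV :: 'a set)" and s1: "sum \<pi> UNIV = 1"
    and nn: "\<And>y. f y \<ge> 0" and mf: "mass f = 1"
  shows "ip (Qop f) (Qop f) - 1 \<le> (ip f f - 1) - beta * (ip f f - 1)^2"
proof -
  have fin: "finite (supp f)" using finite_subset[OF subset_UNIV fu] .
  have a1: "a < 1" by (rule a_lt1)
  define G where "G = ip f f - 1"
  have G0: "G \<ge> 0" using fin_ge1[OF fu s1 mf] by (simp add: G_def)
  have en: "ip (Qop f) (Qop f) \<le> ip f f - a * D UNIV f"
    by (rule energy[OF fu]) auto
  define M where "M = Max (range f)"
  define m where "m = Min (range f)"
  have "M \<in> range f" unfolding M_def using fu by (intro Max_in) auto
  then obtain ymax where ymax: "f ymax = M" by auto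
  have "m \<in> range f" unfolding m_def using fu by (intro Min_in) auto
  then obtain ymin where ymin: "f ymin = m" by auto
  have fM: "f y \<le> M" for y unfolding M_def using fu by (intro Max_ge) auto
  have fm: "m \<le> f y" for y unfolding m_def using fu by (intro Min_le) auto
  have ipM: "ip f f \<le> M" using ip_le_M[OF fin nn fM] mf by simp
  have m1: "m \<le> 1"
  proof -
    have "m = (\<Sum>y\<in>UNIV. \<pi> y * m)" using s1 by (simp add: sum_distrib_right[symmetric])
    also have "\<dots> \<le> (\<Sum>y\<in>UNIV. \<pi> y * f y * 1)"
      using fm pos by (intro sum_mono) (simp add: less_imp_le mult_left_mono)
    also have "\<dots> = mass f" unfolding mass_def by (rule ip_eq[OF fu, symmetric]) auto
    finally show ?thesis using mf by simp
  qed
  have GMm: "G \<le> M - m" using ipM m1 by (simp add: G_def)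
  have Dnn: "D UNIV f \<ge> 0" by (rule D_nonneg)
  show ?thesis
  proof (cases "ymax = ymin")
    case True
    hence "G = 0" using GMm G0 ymax ymin by simp
    moreover have "0 \<le> a * D UNIV f" using apos Dnn by simp
    ultimately show ?thesis using en by (simp add: G_def)
  next
    case False
    define S where "S = UNIV - {ymin}"
    have yS: "ymax \<in> S" "ymin \<notin> S" using False by (auto simp: S_def)
    obtain k where "Qpow Q k ymax ymin > 0" using irr by blast
    from walk[OF this yS] obtain ps z' where
      ps: "pth Q ps z'" "distinct ps" "ps \<noteq> []" "hd ps = ymax" "set ps \<subseteq> S" "z' \<notin> S" by blast
    have zmin: "z' = ymin" using ps(6) by (simp add: S_def)
    have zn: "z' \<notin> set ps" using ps(5) ps(6) by blast
    have Dge: "2 * c * esum f ps z' \<le> D UNIV f"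
      using eset_sum[OF ps(1) ps(2) zn, of f] D_ge_eset[OF fu, of ps z' f] by simp
    define L where "L = real (length ps)"
    define E where "E = esum f ps z'"
    have Lpos: "L > 0" using ps(3) by (simp add: L_def)
    have cs: "(M - m)^2 \<le> L * E"
      using esum_cs[OF ps(3), of f z'] ps(4) zmin ymax ymin by (simp add: L_def E_def)
    have LU: "L \<le> real (card (UNIV :: 'a set))"
    proof -
      have "length ps = card (set ps)" using distinct_card[OF ps(2)] by simp
      also have "\<dots> \<le> card (UNIV :: 'a set)" using card_mono[OF fu] by blast
      finally show ?thesis by (simp add: L_def)
    qed
    have cardU: "real (card (UNIV :: 'a set)) * (c / (1 - a)) \<le> 1"
    proof -
      have "real (card (UNIV :: 'a set)) * (c / (1 - a)) = (\<Sum>y\<in>(UNIV :: 'a set). c / (1 - a))" by simp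
      also have "\<dots> \<le> (\<Sum>y\<in>UNIV. \<pi> y)" using pi_lower by (intro sum_mono) auto
      finally show ?thesis using s1 by simp
    qed
    have Lc: "L * c \<le> 1 - a"
    proof -
      have "L * (c / (1 - a)) \<le> real (card (UNIV :: 'a set)) * (c / (1 - a))"
        using LU cpos a1 by (intro mult_right_mono) auto
      hence "L * (c / (1 - a)) \<le> 1" using cardU by linarith
      thus ?thesis using a1 by (simp add: field_simps)
    qed
    have Enn: "E \<ge> 0"
    proof -
      have "0 \<le> (M - m)^2" by simp
      hence "0 \<le> L * E" using cs by linarith
      thus ?thesis using Lpos by (simp add: zero_le_mult_iff)
    qed
    have key: "c * (M - m)^2 \<le> (1 - a) * E"
    proof -
      have "c * (M - m)^2 \<le> c * (L * E)" using cs cpos by (intro mult_left_mono) auto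
      also have "\<dots> = (L * c) * E" by (simp add: mult_ac)
      also have "\<dots> \<le> (1 - a) * E" using Lc Enn by (intro mult_right_mono) auto
      finally show ?thesis .
    qed
    have "beta * G^2 \<le> beta * (M - m)^2"
      using G0 GMm apos cpos a1 by (intro mult_left_mono power_mono) (auto simp: beta_def)
    also have "\<dots> = (2 * a * c / (1 - a)) * (c * (M - m)^2)"
      by (simp add: beta_def power2_eq_square field_simps)
    also have "\<dots> \<le> (2 * a * c / (1 - a)) * ((1 - a) * E)"
      using key apos cpos a1 by (intro mult_left_mono) auto
    also have "\<dots> = a * (2 * c * E)" using a1 by (simp add: field_simps)
    also have "\<dots> \<le> a * D UNIV f" using Dge apos by (simp add: E_def)
    finally have "beta * G^2 \<le> a * D UNIV f" .
    thus ?thesis using en by (simp add: G_def)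
  qed
qed

end


lemma step_arith:
  fixes \<alpha> n n' :: real
  assumes al: "\<alpha> > 0" and n: "n > 0" and n': "n' > 0" and st: "n' \<le> n - \<alpha> * n^3"
  shows "1 / n^2 + 2 * \<alpha> \<le> 1 / n'^2"
proof -
  define x where "x = \<alpha> * n^2"
  have x0: "x \<ge> 0" using al by (simp add: x_def)
  have st': "n' \<le> n * (1 - x)" using st by (simp add: x_def power2_eq_square power3_eq_cube algebra_simps)
  have x1: "x < 1"
  proof -
    have "0 < n * (1 - x)" using st' n' by linarith
    thus ?thesis using n by (simp add: zero_less_mult_iff)
  qed
  have "n'^2 \<le> (n * (1 - x))^2" using st' n' by (intro power_mono) auto
  hence "(1 + 2 * x) * n'^2 \<le> (1 + 2 * x) * (n * (1 - x))^2" using x0 by (intro mult_left_mono) auto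
  also have "\<dots> = n^2 * ((1 + 2 * x) * (1 - x)^2)" by (simp add: power2_eq_square algebra_simps)
  also have "\<dots> \<le> n^2 * 1"
  proof (intro mult_left_mono)
    have "(1 + 2 * x) * (1 - x)^2 = 1 - x^2 * (3 - 2 * x)" by (simp add: power2_eq_square algebra_simps)
    moreover have "0 \<le> x^2 * (3 - 2 * x)" using x1 by (intro mult_nonneg_nonneg) auto
    ultimately show "(1 + 2 * x) * (1 - x)^2 \<le> 1" by linarith
  qed simp
  finally have key: "(1 + 2 * x) * n'^2 \<le> n^2" by simp
  have "1 / n^2 + 2 * \<alpha> = (1 + 2 * x) / n^2" using n by (simp add: x_def field_simps)
  also have "\<dots> \<le> 1 / n'^2" using key n n' by (simp add: divide_simps)
  finally show ?thesis .
qed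

lemma nash_rec:
  fixes n :: "nat \<Rightarrow> real" and ok :: "nat \<Rightarrow> bool"
  assumes al: "\<alpha> > 0" and npos: "\<And>k. n k > 0" and okdown: "\<And>k. ok (Suc k) \<Longrightarrow> ok k"
    and step: "\<And>k. ok k \<Longrightarrow> n (Suc k) \<le> n k - \<alpha> * (n k)^3"
  shows "ok k \<Longrightarrow> 2 * \<alpha> * real k \<le> 1 / (n k)^2"
proof (induction k)
  case 0 thus ?case by simp
next
  case (Suc k)
  have okk: "ok k" using okdown Suc(2) .
  have IH: "2 * \<alpha> * real k \<le> 1 / (n k)^2" using Suc(1) okk .
  have "1 / (n k)^2 + 2 * \<alpha> \<le> 1 / (n (Suc k))^2"
    by (rule step_arith[OF al npos npos step[OF okk]])
  thus ?case using IH by (simp add: algebra_simps)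
qed

lemma gap_rec:
  fixes G :: "nat \<Rightarrow> real"
  assumes be: "\<beta> \<ge> 0" and ga: "\<gamma> > 0" and G0: "\<And>k. G k \<ge> 0"
    and step: "\<And>k. G (Suc k) \<le> G k - \<beta> * (G k)^2" and init: "G 0 * \<gamma> \<le> 1"
  shows "G k * (\<gamma> + \<beta> * real k) \<le> 1"
proof (induction k)
  case 0 thus ?case using init by simp
next
  case (Suc k)
  define s where "s = \<gamma> + \<beta> * real k"
  define g where "g = G k"
  define g' where "g' = G (Suc k)"
  have IH: "g * s \<le> 1" using Suc by (simp add: s_def g_def)
  have s0: "s \<ge> 0" using be ga by (simp add: s_def)
  have st: "g' \<le> g * (1 - \<beta> * g)" using step[of k] by (simp add: g_def g'_def power2_eq_square algebra_simps)
  show ?case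
  proof (cases "g' = 0")
    case True thus ?thesis by (simp add: g'_def)
  next
    case False
    hence g'p: "g' > 0" using G0[of "Suc k"] by (simp add: g'_def)
    define y where "y = \<beta> * g"
    have gp: "g \<ge> 0" using G0 by (simp add: g_def)
    have y1: "1 - y \<ge> 0"
    proof (rule ccontr)
      assume "\<not> 1 - y \<ge> 0"
      hence "g * (1 - \<beta> * g) \<le> 0" using gp by (simp add: y_def mult_nonneg_nonpos)
      thus False using st g'p by linarith
    qed
    have "g' * (s + \<beta>) \<le> g * (1 - y) * (s + \<beta>)" using st s0 be by (intro mult_right_mono) (auto simp: y_def)
    also have "\<dots> = (1 - y) * (g * s + y)" by (simp add: y_def algebra_simps)
    also have "\<dots> \<le> (1 - y) * (1 + y)" using y1 IH by (intro mult_left_mono) auto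
    also have "\<dots> \<le> 1" by (simp add: algebra_simps)
    finally show ?thesis by (simp add: g'_def s_def algebra_simps)
  qed
qed



context chain begin

definition nn :: "'a \<Rightarrow> nat \<Rightarrow> real" where "nn x k = ip (u x k) (u x k)"
definition B :: "nat \<Rightarrow> real" where "B m = 1 / (a * c * sqrt (real m + 1))"

lemma nn_eq: "nn x k = Qpow Q (2 * k) x x / \<pi> x"
  using ip_u[of x k k] by (simp add: nn_def mult_2)

lemma nn_pos: "nn x k > 0"
  unfolding nn_def by (rule ip_pos[OF u_fin mass_u])

lemma nn_mono: "nn x (Suc k) \<le> nn x k"
proof -
  have C: "finite (nb (u x k))" using nb_finite[OF u_fin] .
  have "ip (Qop (u x k)) (Qop (u x k)) \<le> ip (u x k) (u x k) - a * D (nb (u x k)) (u x k)"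
    by (rule energy[OF C supp_nb supp_Qop[OF u_fin]])
  moreover have "0 \<le> a * D (nb (u x k)) (u x k)" using apos D_nonneg by simp
  ultimately show ?thesis by (simp add: nn_def u_Suc)
qed

lemma q_le_nn: "Qpow Q m x x / \<pi> x \<le> nn x (m div 2)"
proof -
  define k where "k = m div 2"
  have "m = 2 * k \<or> m = Suc (2 * k)" unfolding k_def by presburger
  thus ?thesis
  proof
    assume "m = 2 * k" thus ?thesis by (simp add: nn_eq k_def)
  next
    assume m: "m = Suc (2 * k)"
    have e: "k + Suc k = m" using m by simp
    have "ip (u x k) (u x (Suc k)) = Qpow Q m x x / \<pi> x" using ip_u[of x k "Suc k"] unfolding e .
    hence "Qpow Q m x x / \<pi> x = ip (u x k) (u x (Suc k))" by simp
    also have "\<dots> \<le> (nn x k + nn x (Suc k)) / 2" using ip_am[OF u_fin u_fin, of x k x "Suc k"]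
      by (simp add: nn_def)
    also have "\<dots> \<le> nn x k" using nn_mono[of x k] by simp
    finally show ?thesis by (simp add: k_def)
  qed
qed

lemma q_small: "Qpow Q m x x / \<pi> x \<le> (1 - a) / c"
proof -
  have a1: "a < 1" by (rule a_lt1)
  have "Qpow Q m x x / \<pi> x \<le> 1 / \<pi> x"
    using Qpow_bounds[of m x x] pos[of x] by (simp add: divide_right_mono)
  also have "\<dots> \<le> (1 - a) / c"
    using pi_lower[of x] cpos a1 pos[of x] by (simp add: field_simps)
  finally show ?thesis .
qed

lemma a_quarter: "a * (1 - a) \<le> 1 / 4"
proof -
  have "0 \<le> (2 * a - 1)^2" by simp
  thus ?thesis by (simp add: power2_eq_square algebra_simps)
qed

lemma B_pos: "B m > 0" unfolding B_def using apos cpos by simp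

lemma bound_from_rec:
  assumes rec: "2 * alpha * real (m div 2) \<le> 1 / (nn x (m div 2))^2"
  shows "Qpow Q m x x / \<pi> x \<le> B m"
proof -
  define k where "k = m div 2"
  have a1: "a < 1" by (rule a_lt1)
  define s where "s = sqrt (real m + 1)"
  have s0: "s > 0" by (simp add: s_def)
  show ?thesis
  proof (cases "k \<le> 5")
    case True
    hence "m \<le> 11" unfolding k_def by linarith
    hence "real m + 1 \<le> 16" by simp
    hence "s \<le> sqrt 16" unfolding s_def by (rule real_sqrt_le_mono)
    hence s4: "s \<le> 4" by simp
    have "a * (1 - a) * s \<le> (1 / 4) * 4"
      using a_quarter s4 s0 apos a1 by (intro mult_mono) auto
    hence as1: "a * (1 - a) * s \<le> 1" by simp
    have "(1 - a) / c = (a * (1 - a) * s) * (1 / (a * c * s))"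
      using apos cpos s0 by (simp add: field_simps)
    also have "\<dots> \<le> 1 * (1 / (a * c * s))"
      using as1 apos cpos s0 by (intro mult_right_mono) auto
    finally have "(1 - a) / c \<le> B m" by (simp add: B_def s_def)
    thus ?thesis using q_small[of m x] by linarith
  next
    case False
    hence k6: "real k \<ge> 6" by simp
    define n where "n = nn x k"
    have n0: "n > 0" using nn_pos by (simp add: n_def)
    have r: "2 * alpha * real k * n^2 \<le> 1" using rec n0 by (simp add: k_def n_def field_simps)
    have mk: "real m + 1 \<le> 2 * real k + 2" unfolding k_def by linarith
    have "27 * (a * (1 - a)) * (real m + 1) \<le> 27 * (1 / 4) * (2 * real k + 2)"
      using a_quarter mk apos a1 by (intro mult_mono) auto
    also have "\<dots> \<le> 16 * real k" using k6 by simp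
    finally have t: "27 * (a * (1 - a)) * (real m + 1) \<le> 16 * real k" .
    have ac: "a^2 * c^2 * (real m + 1) \<le> 2 * alpha * real k"
    proof -
      have "a^2 * c^2 * (real m + 1) = (a * c^2 / (27 * (1 - a))) * (27 * (a * (1 - a)) * (real m + 1))"
        using a1 by (simp add: field_simps power2_eq_square)
      also have "\<dots> \<le> (a * c^2 / (27 * (1 - a))) * (16 * real k)"
        using t apos cpos a1 by (intro mult_left_mono) auto
      also have "\<dots> = 2 * alpha * real k" using a1 by (simp add: alpha_def field_simps)
      finally show ?thesis .
    qed
    have "(n * (a * c * s))^2 = n^2 * (a^2 * c^2 * (real m + 1))"
      by (simp add: s_def power_mult_distrib)
    also have "\<dots> \<le> n^2 * (2 * alpha * real k)" using ac by (intro mult_left_mono) auto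
    also have "\<dots> \<le> 1" using r by (simp add: mult_ac)
    finally have "(n * (a * c * s))^2 \<le> 1^2" by simp
    hence "n * (a * c * s) \<le> 1" by (rule power2_le_imp_le) simp
    hence "n \<le> B m" using apos cpos s0 by (simp add: B_def s_def field_simps)
    thus ?thesis using q_le_nn[of m x] by (simp add: n_def k_def)
  qed
qed

lemma S_ne_inf:
  fixes f :: "'a \<Rightarrow> real"
  assumes inf: "\<not> finite (UNIV :: 'a set)" and fin: "finite (supp f)" and M: "M > 0"
  shows "{y. f y > M / 3} \<noteq> UNIV"
proof
  assume "{y. f y > M / 3} = UNIV"
  moreover have "{y. f y > M / 3} \<subseteq> supp f" using M by (auto simp: supp_def)
  ultimately have "UNIV \<subseteq> supp f" by simp
  hence "finite (UNIV :: 'a set)" using fin by (rule finite_subset)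
  thus False using inf by simp
qed

lemma main_inf:
  assumes inf: "\<not> finite (UNIV :: 'a set)"
  shows "Qpow Q m x x / \<pi> x \<le> B m"
proof -
  have step: "nn x (Suc k) \<le> nn x k - alpha * (nn x k)^3" for k
  proof -
    obtain y0 where y0: "\<forall>y. u x k y \<le> u x k y0" using exists_max[OF u_fin u_nonneg mass_u] by blast
    have Mp: "u x k y0 > 0"
    proof -
      obtain y1 where "u x k y1 \<noteq> 0" using mass_nz[OF mass_u] by blast
      hence "0 < u x k y1" using u_nonneg[of x k y1] by (simp add: less_le)
      thus ?thesis using y0 by (meson less_le_trans)
    qed
    have "ip (Qop (u x k)) (Qop (u x k)) \<le> ip (u x k) (u x k) - alpha * (ip (u x k) (u x k))^3"
      by (rule nash[OF u_fin u_nonneg mass_u _ refl S_ne_inf[OF inf u_fin Mp]]) (use y0 in blast)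
    thus ?thesis by (simp add: nn_def u_Suc)
  qed
  have al: "alpha > 0" using apos cpos a_lt1 by (simp add: alpha_def)
  have "2 * alpha * real (m div 2) \<le> 1 / (nn x (m div 2))^2"
    by (rule nash_rec[OF al nn_pos, of "\<lambda>_. True"]) (use step in auto)
  thus ?thesis by (rule bound_from_rec)
qed

end


context chain begin

lemma S_ne_fin:
  fixes f :: "'a \<Rightarrow> real"
  assumes fu: "finite (UNIV :: 'a set)" and s1: "sum \<pi> UNIV = 1"
    and nnf: "\<And>y. f y \<ge> 0" and mf: "mass f = 1" and M: "\<And>y. f y \<le> M" and n3: "ip f f \<ge> 3"
  shows "{y. f y > M / 3} \<noteq> UNIV"
proof
  assume all: "{y. f y > M / 3} = UNIV"
  have fin: "finite (supp f)" using finite_subset[OF subset_UNIV fu] .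
  have "(\<Sum>y\<in>UNIV. \<pi> y * (M / 3)) = sum \<pi> UNIV * (M / 3)" by (rule sum_distrib_right[symmetric])
  hence "M / 3 = (\<Sum>y\<in>UNIV. \<pi> y * (M / 3))" using s1 by simp
  also have "\<dots> < (\<Sum>y\<in>UNIV. \<pi> y * f y * 1)"
  proof (rule sum_strict_mono[OF fu])
    show "(UNIV :: 'a set) \<noteq> {}" by simp
    fix y
    have "f y > M / 3" using all by blast
    thus "\<pi> y * (M / 3) < \<pi> y * f y * 1" using pos[of y] by simp
  qed
  also have "\<dots> = mass f" unfolding mass_def by (rule ip_eq[OF fu, symmetric]) auto
  finally have "M < 3" using mf by simp
  moreover have "ip f f \<le> M" using ip_le_M[OF fin nnf M] mf by simp
  ultimately show False using n3 by simp
qed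

lemma c_le1: "c \<le> 1" if s1: "sum \<pi> UNIV = 1" and fu: "finite (UNIV :: 'a set)" for x :: 'a
proof -
  obtain z where z: "z \<noteq> x" "Q x z > 0" using has_nbr by blast
  have "\<pi> x \<le> sum \<pi> UNIV" using fu pos by (intro member_le_sum) (auto intro: less_imp_le)
  hence px: "\<pi> x \<le> 1" using s1 by simp
  have "sum (Q x) {z} \<le> 1" by (rule row_le) simp
  hence qz: "Q x z \<le> 1" by simp
  have "c \<le> \<pi> x * Q x z" using c_le z by auto
  also have "\<dots> \<le> 1 * 1" using px qz pos[of x] nonneg[of x z] by (intro mult_mono) auto
  finally show ?thesis by simp
qed

lemma main_fin:
  assumes fu: "finite (UNIV :: 'a set)" and s1: "sum \<pi> UNIV = 1"
  shows "\<bar>Qpow Q m x x / \<pi> x - 1\<bar> \<le> min (B m) (1 / (2 * a^2 * c^2 * (real m + 1)))"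
proof -
  have a1: "a < 1" by (rule a_lt1)
  have c1: "c \<le> 1" using c_le1[OF s1 fu] .
  define G where "G k = nn x k - 1" for k
  define \<gamma> where "\<gamma> = c / (1 - a)"
  have G0: "G k \<ge> 0" for k using fin_ge1[OF fu s1 mass_u] by (simp add: G_def nn_def)
  have Gstep: "G (Suc k) \<le> G k - beta * (G k)^2" for k
    using gap[OF fu s1 u_nonneg mass_u, of x k] by (simp add: G_def nn_def u_Suc)
  have be: "beta \<ge> 0" using apos cpos a1 by (simp add: beta_def)
  have ga: "\<gamma> > 0" using cpos a1 by (simp add: \<gamma>_def)
  have init: "G 0 * \<gamma> \<le> 1"
  proof -
    have "G 0 = 1 / \<pi> x - 1" by (simp add: G_def nn_eq)
    hence "G 0 \<le> 1 / \<pi> x" by simp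
    hence "G 0 * \<gamma> \<le> 1 / \<pi> x * \<gamma>" using ga by (intro mult_right_mono) auto
    also have "\<dots> \<le> 1"
    proof -
      have "\<gamma> \<le> \<pi> x" using pi_lower[of x] by (simp add: \<gamma>_def)
      hence "\<gamma> / \<pi> x \<le> 1" using pos[of x] by (simp add: divide_le_eq)
      thus ?thesis by simp
    qed
    finally show ?thesis .
  qed
  have grec: "G k * (\<gamma> + beta * real k) \<le> 1" for k by (rule gap_rec[OF be ga G0 Gstep init])
  define k where "k = m div 2"
  define q where "q = Qpow Q m x x / \<pi> x"
  have q0: "q \<ge> 0" using Qpow_bounds[of m x x] pos[of x] by (simp add: q_def)
  have qn: "q \<le> nn x k" using q_le_nn[of m x] by (simp add: q_def k_def)
  have dev: "\<bar>q - 1\<bar> \<le> G k"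
  proof -
    have "m = 2 * k \<or> m = Suc (2 * k)" unfolding k_def by presburger
    thus ?thesis
    proof
      assume "m = 2 * k" thus ?thesis using G0[of k] by (simp add: q_def G_def nn_eq)
    next
      assume m: "m = Suc (2 * k)"
      have e: "k + Suc k = m" using m by simp
      have "ip (u x k) (u x (Suc k)) = q" using ip_u[of x k "Suc k"] unfolding e q_def .
      hence "\<bar>q - 1\<bar> \<le> (G k + G (Suc k)) / 2"
        using fin_dev[OF fu s1 mass_u mass_u, of x k x "Suc k"] by (simp add: G_def nn_def)
      also have "\<dots> \<le> G k" using nn_mono[of x k] by (simp add: G_def)
      finally show ?thesis .
    qed
  qed
  define X where "X = 2 * a^2 * c^2 * (real m + 1)"
  have Xp: "X > 0" using apos cpos by (simp add: X_def)
  have Xle: "X \<le> \<gamma> + beta * real k"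
  proof -
    have mk: "real m + 1 \<le> 2 * real k + 2" unfolding k_def by linarith
    have aq: "a * (1 - a) \<le> 1 / 4" by (rule a_quarter)
    have "X \<le> 2 * a^2 * c^2 * (2 * real k + 2)" unfolding X_def using mk apos cpos
      by (intro mult_left_mono) auto
    also have "\<dots> = 4 * a^2 * c^2 + 4 * a^2 * c^2 * real k" by (simp add: algebra_simps)
    finally have e1: "X \<le> 4 * a^2 * c^2 + 4 * a^2 * c^2 * real k" .
    have e2: "4 * a^2 * c^2 \<le> \<gamma>"
    proof -
      have "4 * (a * (1 - a)) * (a * c) \<le> 1 * (1 * 1)"
        using aq a1 apos cpos c1 by (intro mult_mono) auto
      hence "c * (4 * (a * (1 - a)) * (a * c)) \<le> c * 1" using cpos by (intro mult_left_mono) auto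
      hence "4 * a^2 * c^2 * (1 - a) \<le> c" by (simp add: power2_eq_square algebra_simps)
      thus ?thesis using a1 by (simp add: \<gamma>_def field_simps)
    qed
    have e3: "4 * a^2 * c^2 * real k \<le> beta * real k"
    proof (intro mult_right_mono)
      have "2 * (a * (1 - a)) \<le> 1" using aq by simp
      hence "(2 * a * c^2) * (2 * (a * (1 - a))) \<le> (2 * a * c^2) * 1" using apos cpos by (intro mult_left_mono) auto
      hence "4 * a^2 * c^2 * (1 - a) \<le> 2 * a * c^2" by (simp add: power2_eq_square algebra_simps)
      thus "4 * a^2 * c^2 \<le> beta" using a1 by (simp add: beta_def field_simps)
    qed simp
    show ?thesis using e1 e2 e3 by linarith
  qed
  have H: "\<bar>q - 1\<bar> \<le> 1 / X"
  proof -
    have "G k * X \<le> G k * (\<gamma> + beta * real k)" using Xle G0[of k] by (intro mult_left_mono) auto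
    hence "G k * X \<le> 1" using grec[of k] by linarith
    hence "G k \<le> 1 / X" using Xp by (simp add: field_simps)
    thus ?thesis using dev by linarith
  qed
  have BX: "1 / X = (B m)^2 / 2"
    using apos cpos by (simp add: X_def B_def power_mult_distrib field_simps)
  have Bp: "B m > 0" by (rule B_pos)
  have first: "\<bar>q - 1\<bar> \<le> B m"
  proof (cases "B m \<le> 2")
    case True
    have "(B m)^2 / 2 \<le> B m" using True Bp by (simp add: power2_eq_square field_simps)
    thus ?thesis using H BX by linarith
  next
    case False
    hence B2: "B m > 2" by simp
    have up: "q - 1 \<le> B m"
    proof (cases "nn x k < 3")
      case True thus ?thesis using qn B2 by linarith
    next
      case False
      have step: "nn x (Suc j) \<le> nn x j - alpha * (nn x j)^3" if okj: "nn x j \<ge> 3" for j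
      proof -
        obtain y0 where y0: "\<forall>y. u x j y \<le> u x j y0" using exists_max[OF u_fin u_nonneg mass_u] by blast
        have Sne: "{y. u x j y > u x j y0 / 3} \<noteq> UNIV"
          by (rule S_ne_fin[OF fu s1 u_nonneg mass_u]) (use y0 okj nn_def in auto)
        have "ip (Qop (u x j)) (Qop (u x j)) \<le> ip (u x j) (u x j) - alpha * (ip (u x j) (u x j))^3"
          by (rule nash[OF u_fin u_nonneg mass_u _ refl Sne]) (use y0 in blast)
        thus ?thesis by (simp add: nn_def u_Suc)
      qed
      have al: "alpha > 0" using apos cpos a1 by (simp add: alpha_def)
      have okdown: "nn x j \<ge> 3" if "nn x (Suc j) \<ge> 3" for j using nn_mono[of x j] that by linarith
      have "2 * alpha * real k \<le> 1 / (nn x k)^2"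
        by (rule nash_rec[OF al nn_pos, of "\<lambda>j. nn x j \<ge> 3"]) (use step okdown False in auto)
      hence "q \<le> B m" using bound_from_rec[of m x] by (simp add: k_def q_def)
      thus ?thesis by linarith
    qed
    have "- (q - 1) \<le> B m" using q0 B2 by linarith
    thus ?thesis using up by (simp add: abs_le_iff)
  qed
  show ?thesis using first H by (simp add: q_def X_def)
qed

end


theorem lemma3p6:
  fixes Q :: "'a::countable \<Rightarrow> 'a \<Rightarrow> real" and \<pi> :: "'a \<Rightarrow> real"
  assumes "transition_matrix Q"
    and "irreducible_chain Q"
    and "\<And>x. \<pi> x > 0"
    and "reversible Q \<pi>"
    and "\<pi> summable_on UNIV \<Longrightarrow> (\<Sum>\<^sub>\<infinity>x. \<pi> x) = 1"
    and "c = Inf {\<pi> x * Q x y | x y. x \<noteq> y \<and> Q x y > 0}" and "c > 0"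
    and "a = Inf (range (\<lambda>x. Q x x))" and "a > 0"
  shows "\<forall>x k. (\<pi> summable_on UNIV \<longrightarrow>
             \<bar>Qpow Q k x x / \<pi> x - 1\<bar>
               \<le> min (1 / (a * c * sqrt (real k + 1))) (1 / (2 * a^2 * c^2 * (real k + 1))))
           \<and> (\<not> \<pi> summable_on UNIV \<longrightarrow> Qpow Q k x x / \<pi> x \<le> 1 / (a * c * sqrt (real k + 1)))"
proof -
  have nonneg: "\<And>x y. Q x y \<ge> 0" and rows: "\<And>x. (Q x has_sum 1) UNIV"
    using assms(1) unfolding transition_matrix_def by auto
  have rev: "\<And>x y. \<pi> x * Q x y = \<pi> y * Q y x" using assms(4) unfolding reversible_def by auto
  have irr: "\<And>x y. \<exists>k. Qpow Q k x y > 0" using assms(2) unfolding irreducible_chain_def by auto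
  show ?thesis
  proof (cases "\<exists>x y::'a. x \<noteq> y")
    case True
    have c_le: "c \<le> \<pi> x * Q x y" if "x \<noteq> y" "Q x y > 0" for x y
      unfolding assms(6)
    proof (rule cInf_lower)
      show "\<pi> x * Q x y \<in> {\<pi> x * Q x y | x y. x \<noteq> y \<and> Q x y > 0}" using that by blast
      show "bdd_below {\<pi> x * Q x y | x y. x \<noteq> y \<and> Q x y > 0}"
      proof (rule bdd_belowI)
        fix t assume "t \<in> {\<pi> x * Q x y | x y. x \<noteq> y \<and> Q x y > 0}"
        then obtain x' y' where "t = \<pi> x' * Q x' y'" "Q x' y' > 0" by blast
        thus "0 \<le> t" using assms(3)[of x'] by simp
      qed
    qed
    have a_le: "a \<le> Q x x" for x
      unfolding assms(8)
    proof (rule cInf_lower)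
      show "Q x x \<in> range (\<lambda>x. Q x x)" by simp
      show "bdd_below (range (\<lambda>x. Q x x))" using nonneg by (intro bdd_belowI) auto
    qed
    interpret ch: chain Q \<pi> a c
      by unfold_locales (use nonneg rows assms(3) rev irr assms(7) assms(9) c_le a_le True in auto)
    show ?thesis
    proof (intro allI conjI impI)
      fix x :: 'a and k :: nat
      assume sm: "\<pi> summable_on UNIV"
      have fu: "finite (UNIV :: 'a set)"
      proof (rule ccontr)
        assume inf: "infinite (UNIV :: 'a set)"
        have a1: "a < 1" by (rule ch.a_lt1)
        obtain n :: nat where n: "(1 - a) / c < real n" using reals_Archimedean2 by blast
        obtain F :: "'a set" where F: "finite F" "card F = n"
          using infinite_arbitrarily_large[OF inf] by blast
        have "real n * (c / (1 - a)) = (\<Sum>y\<in>F. c / (1 - a))" using F by simp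
        also have "\<dots> \<le> sum \<pi> F" using ch.pi_lower by (intro sum_mono) auto
        also have "\<dots> \<le> (\<Sum>\<^sub>\<infinity>x. \<pi> x)"
          by (rule hassum_fin_le[OF has_sum_infsum[OF sm] F(1)]) (use assms(3) in \<open>simp add: less_imp_le\<close>)
        also have "\<dots> = 1" using assms(5)[OF sm] .
        finally have "real n * (c / (1 - a)) \<le> 1" .
        moreover have "(1 - a) / c * (c / (1 - a)) < real n * (c / (1 - a))"
          using n assms(7) a1 by (intro mult_strict_right_mono) auto
        ultimately show False using assms(7) a1 by simp
      qed
      have s1: "sum \<pi> UNIV = 1" using assms(5)[OF sm] fu by simp
      show "\<bar>Qpow Q k x x / \<pi> x - 1\<bar>
               \<le> min (1 / (a * c * sqrt (real k + 1))) (1 / (2 * a^2 * c^2 * (real k + 1)))"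
        using ch.main_fin[OF fu s1, of k x] by (simp add: ch.B_def)
    next
      fix x :: 'a and k :: nat
      assume ns: "\<not> \<pi> summable_on UNIV"
      have inf: "\<not> finite (UNIV :: 'a set)" using ns summable_on_finite by blast
      show "Qpow Q k x x / \<pi> x \<le> 1 / (a * c * sqrt (real k + 1))"
        using ch.main_inf[OF inf, of k x] by (simp add: ch.B_def)
    qed
  next
    case False
    hence eq: "\<And>x y::'a. x = y" by blast
    show ?thesis
    proof (intro allI conjI impI)
      fix x :: 'a and k :: nat
      have fu: "finite (UNIV :: 'a set)"
      proof -
        have "(UNIV :: 'a set) \<subseteq> {x}" using eq by blast
        thus ?thesis by (rule finite_subset) simp
      qed
      have sm: "\<pi> summable_on UNIV" using fu by simp
      have "(\<Sum>\<^sub>\<infinity>y. \<pi> y) = sum \<pi> {x}" by (rule infsum_fin) (use eq in auto)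
      hence px: "\<pi> x = 1" using assms(5)[OF sm] by simp
      have "(\<Sum>\<^sub>\<infinity>y. Q x y) = sum (Q x) {x}" by (rule infsum_fin) (use eq in auto)
      moreover have "(\<Sum>\<^sub>\<infinity>y. Q x y) = 1" using rows[of x] infsumI by blast
      ultimately have qx: "Q x x = 1" by simp
      have qp: "Qpow Q j x x = 1" for j
      proof (induction j)
        case 0 thus ?case by simp
      next
        case (Suc j)
        have "Qpow Q (Suc j) x x = (\<Sum>z\<in>{x}. Q x z * Qpow Q j z x)"
          by (simp only: Qpow.simps, rule infsum_fin) (use eq in auto)
        thus ?case using Suc qx by simp
      qed
      have pos1: "0 < 1 / (a * c * sqrt (real k + 1))" using assms(7) assms(9) by simp
      have pos2: "0 < 1 / (2 * a^2 * c^2 * (real k + 1))" using assms(7) assms(9) by simp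
      show "\<bar>Qpow Q k x x / \<pi> x - 1\<bar>
               \<le> min (1 / (a * c * sqrt (real k + 1))) (1 / (2 * a^2 * c^2 * (real k + 1)))"
        using qp[of k] px pos1 pos2 by simp
    next
      fix x :: 'a and k :: nat
      assume ns: "\<not> \<pi> summable_on UNIV"
      have "(UNIV :: 'a set) \<subseteq> {x}" using eq by blast
      hence "finite (UNIV :: 'a set)" by (rule finite_subset) simp
      thus "Qpow Q k x x / \<pi> x \<le> 1 / (a * c * sqrt (real k + 1))" using ns by simp
    qed
  qed
qed


end
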